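(* Let $\psi$ be a $\mathbf{\Sigma}$-piecewise linear function on $N_{\mathbb{R}}$. Then $\dim\Lambda_\psi<m$ if and only if there exist an index $k\in\{1,\dots,n\}$ and a constant $c\in\mathbb{R}$ such that $\langle\lambda,v_k\rangle=c$ for all $\lambda\in\Lambda_\psi$.
   Context: $N$ is a lattice of rank $m$, $M=\mathrm{Hom}(N,\mathbb{Z})$, $N_{\mathbb{R}}=N\otimes\mathbb{R}$, $M_{\mathbb{R}}=M\otimes\mathbb{R}$, with the natural pairing $\langle\cdot,\cdot\rangle$; $\Sigma$ is a complete simplicial fan in $N_{\mathbb{R}}$ with $n$ rays and $v_i\in N$ a nonzero lattice point on the $i$-th ray ($\mathbf{\Sigma}=(\Sigma,\{v_i\})$). A $\mathbf{\Sigma}$-piecewise linear function is a continuous $\psi:N_{\mathbb{R}}\to\mathbb{R}$ whose restriction to each cone of $\Sigma$ is linear; for each maximal cone $\sigma$, $\psi_\sigma\in M_{\mathbb{R}}$ is the linear function agreeing with $\psi$ on $\sigma$. $\Lambda_\psi\subset M_{\mathbb{R}}$ is the convex hull of $\{\psi_\sigma:\sigma\text{ a maximal cone of }\Sigma\}$. *)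

theory Defs
  imports "HOL-Analysis.Analysis"
begin

text \<open>N = integer points of real^'m (a lattice of rank m = CARD('m)); N_R = real^'m;
  M_R is identified with real^'m via the standard pairing (inner product).
  A simplicial fan with rays indexed by {0..<n} (generators v i) is encoded by the
  set Sig of index sets of its cones; the cone of an index set S is the
  nonnegative span of the v i, i in S.\<close>

definition lattice_point :: "real^'m \<Rightarrow> bool" where
  "lattice_point x \<longleftrightarrow> (\<forall>j. x $ j \<in> \<int>)"

definition gen_cone :: "(nat \<Rightarrow> real^'m) \<Rightarrow> nat set \<Rightarrow> (real^'m) set" where
  "gen_cone v S = {x. \<exists>a. (\<forall>i\<in>S. 0 \<le> a i) \<and> x = (\<Sum>i\<in>S. a i *\<^sub>R v i)}"

definition complete_simplicial_fan ::
  "nat \<Rightarrow> (nat \<Rightarrow> real^'m) \<Rightarrow> nat set set \<Rightarrow> bool" where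
  "complete_simplicial_fan n v Sig \<longleftrightarrow>
     (\<forall>i<n. lattice_point (v i) \<and> v i \<noteq> 0) \<and>
     (\<forall>S\<in>Sig. S \<subseteq> {0..<n}) \<and>
     (\<forall>i<n. {i} \<in> Sig) \<and>
     (\<forall>S\<in>Sig. \<forall>T. T \<subseteq> S \<longrightarrow> T \<in> Sig) \<and>
     (\<forall>S\<in>Sig. inj_on v S \<and> independent (v ` S)) \<and>
     (\<forall>S\<in>Sig. \<forall>T\<in>Sig. gen_cone v S \<inter> gen_cone v T = gen_cone v (S \<inter> T)) \<and>
     (\<Union>S\<in>Sig. gen_cone v S) = UNIV"

definition maximal_cone :: "nat set set \<Rightarrow> nat set \<Rightarrow> bool" where
  "maximal_cone Sig S \<longleftrightarrow> S \<in> Sig \<and> (\<forall>T\<in>Sig. S \<subseteq> T \<longrightarrow> T = S)"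

definition piecewise_linear ::
  "(nat \<Rightarrow> real^'m) \<Rightarrow> nat set set \<Rightarrow> (real^'m \<Rightarrow> real) \<Rightarrow> bool" where
  "piecewise_linear v Sig \<psi> \<longleftrightarrow> continuous_on UNIV \<psi> \<and>
     (\<forall>S\<in>Sig. \<exists>l::real^'m. \<forall>x\<in>gen_cone v S. \<psi> x = l \<bullet> x)"

definition psi_sigma_set ::
  "(nat \<Rightarrow> real^'m) \<Rightarrow> nat set set \<Rightarrow> (real^'m \<Rightarrow> real) \<Rightarrow> (real^'m) set" where
  "psi_sigma_set v Sig \<psi> =
     {l. \<exists>S. maximal_cone Sig S \<and> (\<forall>x\<in>gen_cone v S. \<psi> x = l \<bullet> x)}"

definition Lambda_psi ::
  "(nat \<Rightarrow> real^'m) \<Rightarrow> nat set set \<Rightarrow> (real^'m \<Rightarrow> real) \<Rightarrow> (real^'m) set" where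
  "Lambda_psi v Sig \<psi> = convex hull (psi_sigma_set v Sig \<psi>)"

end

theory Submission imports Defs begin

lemma gc_add: "x \<in> gen_cone v S \<Longrightarrow> y \<in> gen_cone v S \<Longrightarrow> x + y \<in> gen_cone v S"
  unfolding gen_cone_def
proof clarify
  fix a b :: "nat \<Rightarrow> real" assume "\<forall>i\<in>S. 0 \<le> a i" "\<forall>i\<in>S. 0 \<le> b i"
  then show "\<exists>c. (\<forall>i\<in>S. 0 \<le> c i) \<and> (\<Sum>i\<in>S. a i *\<^sub>R v i) + (\<Sum>i\<in>S. b i *\<^sub>R v i) = (\<Sum>i\<in>S. c i *\<^sub>R v i)"
    by (intro exI[of _ "\<lambda>i. a i + b i"]) (auto simp: sum.distrib scaleR_add_left)
qed

lemma gc_scale: "x \<in> gen_cone v S \<Longrightarrow> 0 \<le> c \<Longrightarrow> c *\<^sub>R x \<in> gen_cone v S"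
  unfolding gen_cone_def
proof clarify
  fix a :: "nat \<Rightarrow> real" assume "\<forall>i\<in>S. 0 \<le> a i" "0 \<le> c"
  then show "\<exists>b. (\<forall>i\<in>S. 0 \<le> b i) \<and> c *\<^sub>R (\<Sum>i\<in>S. a i *\<^sub>R v i) = (\<Sum>i\<in>S. b i *\<^sub>R v i)"
    by (intro exI[of _ "\<lambda>i. c * a i"]) (auto simp: scaleR_sum_right)
qed

lemma gc_zero: "0 \<in> gen_cone v S"
  unfolding gen_cone_def by (intro CollectI exI[of _ "\<lambda>i. 0"]) auto

lemma gc_gen: "finite S \<Longrightarrow> i \<in> S \<Longrightarrow> v i \<in> gen_cone v S"
  unfolding gen_cone_def
proof (intro CollectI exI[of _ "\<lambda>j. if j = i then 1 else 0"] conjI)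
  assume "finite S" "i \<in> S"
  have "(\<Sum>j\<in>S. (if j = i then 1 else 0) *\<^sub>R v j) = (\<Sum>j\<in>S. if j = i then v j else 0)"
    by (rule sum.cong) auto
  also have "\<dots> = v i" using \<open>finite S\<close> \<open>i \<in> S\<close> by simp
  finally show "v i = (\<Sum>j\<in>S. (if j = i then 1 else 0) *\<^sub>R v j)" by simp
qed auto

lemma gc_sub: assumes "finite S" "T \<subseteq> S" shows "gen_cone v T \<subseteq> gen_cone v S"
proof
  fix x assume "x \<in> gen_cone v T"
  then obtain a where a: "\<forall>i\<in>T. 0 \<le> a i" "x = (\<Sum>i\<in>T. a i *\<^sub>R v i)" unfolding gen_cone_def by auto
  define b where "b i = (if i \<in> T then a i else 0)" for i
  have "(\<Sum>i\<in>S. b i *\<^sub>R v i) = (\<Sum>i\<in>T. b i *\<^sub>R v i)"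
    using assms by (intro sum.mono_neutral_right) (auto simp: b_def)
  also have "\<dots> = x" using a by (simp add: b_def)
  finally show "x \<in> gen_cone v S" unfolding gen_cone_def using a
    by (intro CollectI exI[of _ b]) (auto simp: b_def)
qed

lemma gc_convex: "convex (gen_cone v S)"
  unfolding convex_def by (auto intro!: gc_add gc_scale)

lemma sum_in_cc: "finite S \<Longrightarrow> (\<forall>i\<in>S. 0 \<le> a i) \<Longrightarrow> (\<forall>i\<in>S. f i \<in> convex_cone hull T)
  \<Longrightarrow> (\<Sum>i\<in>S. a i *\<^sub>R f i) \<in> convex_cone hull T"
  by (induction S rule: finite_induct)
     (auto intro!: convex_cone_hull_add convex_cone_hull_mul convex_cone_hull_contains_0)

lemma gc_hull: assumes "finite S" shows "gen_cone v S = convex_cone hull (v ` S)"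
proof
  show "gen_cone v S \<subseteq> convex_cone hull v ` S"
    unfolding gen_cone_def using assms by clarify (rule sum_in_cc, auto intro: hull_inc)
  show "convex_cone hull v ` S \<subseteq> gen_cone v S"
  proof (rule hull_minimal)
    show "v ` S \<subseteq> gen_cone v S" using gc_gen assms by auto
    show "convex_cone (gen_cone v S)"
      unfolding convex_cone_def conic_def using gc_zero gc_convex gc_scale by blast
  qed
qed

lemma gc_closed: "finite S \<Longrightarrow> closed (gen_cone v S :: (real^'m) set)"
  by (simp add: gc_hull closed_convex_cone_hull)

context
  fixes n :: nat and v :: "nat \<Rightarrow> real^'m" and Sig :: "nat set set"
  assumes fan: "complete_simplicial_fan n v Sig"
begin

lemmas fanD = fan[unfolded complete_simplicial_fan_def]

lemma fan_nz: "i < n \<Longrightarrow> v i \<noteq> 0"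
  using fanD[THEN conjunct1] by blast

lemma fan_sub: "S \<in> Sig \<Longrightarrow> S \<subseteq> {0..<n}"
  using fanD[THEN conjunct2, THEN conjunct1] by blast

lemma fan_indep: "S \<in> Sig \<Longrightarrow> inj_on v S \<and> independent (v ` S)"
  using fanD[THEN conjunct2, THEN conjunct2, THEN conjunct2, THEN conjunct2, THEN conjunct1] by blast

lemma inter: "S \<in> Sig \<Longrightarrow> T \<in> Sig \<Longrightarrow> gen_cone v S \<inter> gen_cone v T = gen_cone v (S \<inter> T)"
  using fanD[THEN conjunct2, THEN conjunct2, THEN conjunct2, THEN conjunct2, THEN conjunct2, THEN conjunct1] by blast

lemma cover_UN: "(\<Union>S\<in>Sig. gen_cone v S) = UNIV"
  using fanD[THEN conjunct2, THEN conjunct2, THEN conjunct2, THEN conjunct2, THEN conjunct2, THEN conjunct2] .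

lemma cover: "\<exists>S\<in>Sig. x \<in> gen_cone v S"
proof -
  have "x \<in> (\<Union>S\<in>Sig. gen_cone v S)" using cover_UN by simp
  then show ?thesis by simp
qed

lemma Sig_finite: "S \<in> Sig \<Longrightarrow> finite S"
  using fan_sub finite_subset by blast

lemma finite_Sig: "finite Sig"
proof -
  have "Sig \<subseteq> Pow {0..<n}" using fan_sub by auto
  then show ?thesis by (rule finite_subset) auto
qed

lemma coeff_zero:
  assumes S: "S \<in> Sig" and sum0: "(\<Sum>i\<in>S. c i *\<^sub>R v i) = 0" and i: "i \<in> S"
  shows "c i = 0"
proof -
  have inj: "inj_on v S" and ind: "independent (v ` S)"
    using fan_indep[OF S] by auto
  have fin: "finite S" using Sig_finite S .
  define f where "f = the_inv_into S v"
  have ff: "f (v j) = j" if "j \<in> S" for j using the_inv_into_f_f[OF inj that] f_def by simp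
  have "(\<Sum>w\<in>v ` S. c (f w) *\<^sub>R w) = (\<Sum>j\<in>S. c (f (v j)) *\<^sub>R v j)"
    by (simp add: sum.reindex[OF inj])
  also have "\<dots> = (\<Sum>j\<in>S. c j *\<^sub>R v j)" by (rule sum.cong) (auto simp: ff)
  finally have "(\<Sum>w\<in>v ` S. c (f w) *\<^sub>R w) = 0" using sum0 by simp
  note s0 = this
  have "c (f (v i)) = 0"
  proof (rule ccontr)
    assume nz: "c (f (v i)) \<noteq> 0"
    have "dependent (v ` S)"
      unfolding real_vector.dependent_finite[OF finite_imageI[OF fin]]
      using nz i s0 by (intro exI[of _ "\<lambda>w. c (f w)"]) auto
    then show False using ind by simp
  qed
  then show ?thesis using ff i by simp
qed

lemma relint:
  assumes tau: "\<tau> \<in> Sig" and apos: "\<forall>i\<in>\<tau>. 0 < a i" and S: "S \<in> Sig"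
    and uS: "(\<Sum>i\<in>\<tau>. a i *\<^sub>R v i) \<in> gen_cone v S"
  shows "\<tau> \<subseteq> S"
proof
  fix j assume j: "j \<in> \<tau>"
  have fin: "finite \<tau>" using Sig_finite tau .
  let ?u = "(\<Sum>i\<in>\<tau>. a i *\<^sub>R v i)"
  have "?u \<in> gen_cone v \<tau>" unfolding gen_cone_def using apos by (auto intro!: exI[of _ a] less_imp_le)
  then have "?u \<in> gen_cone v (S \<inter> \<tau>)" using inter[OF S tau] uS by auto
  then obtain b where b: "?u = (\<Sum>i\<in>S \<inter> \<tau>. b i *\<^sub>R v i)" unfolding gen_cone_def by auto
  define b' where "b' i = (if i \<in> S then b i else 0)" for i
  have "(\<Sum>i\<in>S \<inter> \<tau>. b i *\<^sub>R v i) = (\<Sum>i\<in>\<tau>. b' i *\<^sub>R v i)"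
  proof -
    have "(\<Sum>i\<in>S \<inter> \<tau>. b i *\<^sub>R v i) = (\<Sum>i\<in>\<tau>. if i \<in> S then b i *\<^sub>R v i else 0)"
      using sum.inter_restrict[OF fin, of "\<lambda>i. b i *\<^sub>R v i" S] by (simp add: Int_commute)
    also have "\<dots> = (\<Sum>i\<in>\<tau>. b' i *\<^sub>R v i)" by (rule sum.cong) (auto simp: b'_def)
    finally show ?thesis .
  qed
  then have "(\<Sum>i\<in>\<tau>. (a i - b' i) *\<^sub>R v i) = 0"
    using b by (simp add: scaleR_diff_left sum_subtractf)
  then have "a j - b' j = 0" by (rule coeff_zero[OF tau _ j, of "\<lambda>i. a i - b' i"])
  then show "j \<in> S" using apos j unfolding b'_def by (auto split: if_splits)
qed

lemma near: "\<exists>d>0. \<forall>y. dist p y < d \<longrightarrow> (\<forall>S\<in>Sig. y \<in> gen_cone v S \<longrightarrow> p \<in> gen_cone v S)"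
proof -
  define F where "F = {S \<in> Sig. p \<notin> gen_cone v S}"
  define U where "U = (\<Inter>S\<in>F. - gen_cone v S)"
  have "finite F" using finite_Sig unfolding F_def by simp
  moreover have "\<forall>S\<in>F. open (- gen_cone v S)"
    using Sig_finite gc_closed unfolding F_def by (auto intro!: open_Compl)
  ultimately have "open U" unfolding U_def by (rule open_INT)
  moreover have "p \<in> U" unfolding U_def F_def by simp
  ultimately obtain d where d: "d > 0" "ball p d \<subseteq> U" by (meson open_contains_ball)
  show ?thesis
  proof (intro exI[of _ d] conjI allI impI ballI d(1))
    fix y S assume y: "dist p y < d" and S: "S \<in> Sig" "y \<in> gen_cone v S"
    show "p \<in> gen_cone v S"
    proof (rule ccontr)
      assume "p \<notin> gen_cone v S"
      then have "S \<in> F" using S unfolding F_def by simp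
      moreover have "y \<in> U" using d(2) y by auto
      ultimately show False using S(2) unfolding U_def by blast
    qed
  qed
qed

lemma star:
  assumes tau: "\<tau> \<in> Sig" and apos: "\<forall>i\<in>\<tau>. 0 < a i"
  shows "\<exists>d>0. \<forall>y. dist (\<Sum>i\<in>\<tau>. a i *\<^sub>R v i) y < d \<longrightarrow> (\<forall>S\<in>Sig. y \<in> gen_cone v S \<longrightarrow> \<tau> \<subseteq> S)"
proof -
  obtain d where d: "d > 0" "\<forall>y. dist (\<Sum>i\<in>\<tau>. a i *\<^sub>R v i) y < d \<longrightarrow> (\<forall>S\<in>Sig. y \<in> gen_cone v S \<longrightarrow> (\<Sum>i\<in>\<tau>. a i *\<^sub>R v i) \<in> gen_cone v S)"
    using near by blast
  show ?thesis using d relint[OF tau apos] by blast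
qed

lemma max_above: "S \<in> Sig \<Longrightarrow> \<exists>T. maximal_cone Sig T \<and> S \<subseteq> T"
proof -
  assume S: "S \<in> Sig"
  have f1: "finite {T \<in> Sig. S \<subseteq> T}" using finite_Sig by simp
  have f2: "{T \<in> Sig. S \<subseteq> T} \<noteq> {}" using S by auto
  obtain T where T: "T \<in> {T \<in> Sig. S \<subseteq> T}" "\<forall>U \<in> {T \<in> Sig. S \<subseteq> T}. T \<le> U \<longrightarrow> T = U"
    using finite_has_maximal[OF f1 f2] by (elim bexE) (rule that)
  have TS: "T \<in> Sig" "S \<subseteq> T" using T(1) by auto
  have "maximal_cone Sig T"
    unfolding maximal_cone_def
  proof (intro conjI ballI impI TS(1))
    fix U assume U: "U \<in> Sig" "T \<subseteq> U"
    have "S \<subseteq> U" by (rule subset_trans[OF TS(2) U(2)])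
    then have "U \<in> {T \<in> Sig. S \<subseteq> T}" using U(1) by simp
    then have "T \<subseteq> U \<longrightarrow> T = U" by (rule bspec[OF T(2)])
    then show "U = T" using U(2) by simp
  qed
  then show ?thesis using TS(2) by blast
qed

lemma fulldim:
  assumes "maximal_cone Sig \<sigma>"
  shows "\<exists>x r. r > 0 \<and> ball x r \<subseteq> gen_cone v \<sigma>"
proof -
  have sig: "\<sigma> \<in> Sig" using assms unfolding maximal_cone_def by auto
  define x where "x = (\<Sum>i\<in>\<sigma>. 1 *\<^sub>R v i)"
  obtain d where d1: "d > 0" and d2: "\<And>y S. dist x y < d \<Longrightarrow> S \<in> Sig \<Longrightarrow> y \<in> gen_cone v S \<Longrightarrow> \<sigma> \<subseteq> S"
    using star[OF sig, of "\<lambda>i. 1"] unfolding x_def by auto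
  have "ball x d \<subseteq> gen_cone v \<sigma>"
  proof
    fix y assume y: "y \<in> ball x d"
    obtain S where S: "S \<in> Sig" "y \<in> gen_cone v S" using cover by blast
    have "dist x y < d" using y by simp
    then have "\<sigma> \<subseteq> S" using d2 S by blast
    then have "S = \<sigma>" using assms S(1) unfolding maximal_cone_def by blast
    then show "y \<in> gen_cone v \<sigma>" using S(2) by simp
  qed
  then show ?thesis using d1 by (intro exI[of _ x] exI[of _ d] conjI)
qed


lemma fan_down: "S \<in> Sig \<Longrightarrow> T \<subseteq> S \<Longrightarrow> T \<in> Sig"
  using fanD[THEN conjunct2, THEN conjunct2, THEN conjunct2, THEN conjunct1] by blast

context
  fixes \<psi> :: "real^'m \<Rightarrow> real"
  assumes pwl: "piecewise_linear v Sig \<psi>"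
begin

lemma pwl_lin: "S \<in> Sig \<Longrightarrow> \<exists>l. \<forall>x\<in>gen_cone v S. \<psi> x = l \<bullet> x"
  using pwl unfolding piecewise_linear_def by blast

lemma right_step:
  assumes w: "\<forall>l\<in>psi_sigma_set v Sig \<psi>. l \<bullet> w = c1"
  shows "\<exists>e>0. \<forall>s. 0 \<le> s \<and> s \<le> e \<longrightarrow> \<psi> (p + s *\<^sub>R w) = \<psi> p + s * c1"
proof -
  obtain d where d1: "d > 0" and d2: "\<And>y S. dist p y < d \<Longrightarrow> S \<in> Sig \<Longrightarrow> y \<in> gen_cone v S \<Longrightarrow> p \<in> gen_cone v S"
    using near[of p] by blast
  define e where "e = d / (norm w + 1)"
  have np: "norm w + 1 > 0" by (simp add: add_nonneg_pos)
  have e: "e > 0" using d1 np by (simp add: e_def)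
  have "dist p (p + e *\<^sub>R w) = e * norm w" using e by (simp add: dist_norm)
  also have "\<dots> < e * (norm w + 1)" using e by simp
  also have "\<dots> = d" using np by (simp add: e_def)
  finally have dd: "dist p (p + e *\<^sub>R w) < d" .
  obtain S where S: "S \<in> Sig" "p + e *\<^sub>R w \<in> gen_cone v S" using cover by blast
  have pS: "p \<in> gen_cone v S" using d2[OF dd S] .
  obtain \<sigma> where sg: "maximal_cone Sig \<sigma>" "S \<subseteq> \<sigma>" using max_above[OF S(1)] by blast
  have sgS: "\<sigma> \<in> Sig" using sg unfolding maximal_cone_def by blast
  obtain l where l: "\<forall>x\<in>gen_cone v \<sigma>. \<psi> x = l \<bullet> x" using pwl_lin[OF sgS] by blast
  have lP: "l \<in> psi_sigma_set v Sig \<psi>" unfolding psi_sigma_set_def using sg(1) l by blast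
  have sub: "gen_cone v S \<subseteq> gen_cone v \<sigma>" by (rule gc_sub[OF Sig_finite[OF sgS] sg(2)])
  show ?thesis
  proof (intro exI[of _ e] conjI allI impI e)
    fix s assume s: "0 \<le> s \<and> s \<le> e"
    have eq: "(1 - s / e) *\<^sub>R p + (s / e) *\<^sub>R (p + e *\<^sub>R w) = p + s *\<^sub>R w"
      using e by (simp add: algebra_simps)
    have "(1 - s / e) *\<^sub>R p + (s / e) *\<^sub>R (p + e *\<^sub>R w) \<in> gen_cone v S"
      using s e by (intro convexD[OF gc_convex pS S(2)]) auto
    then have "p + s *\<^sub>R w \<in> gen_cone v \<sigma>" using eq sub by auto
    then have "\<psi> (p + s *\<^sub>R w) = l \<bullet> (p + s *\<^sub>R w)" using l by blast
    also have "\<dots> = l \<bullet> p + s * (l \<bullet> w)" by (simp add: inner_add_right)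
    also have "\<dots> = \<psi> p + s * c1" using l pS sub w lP by auto
    finally show "\<psi> (p + s *\<^sub>R w) = \<psi> p + s * c1" .
  qed
qed

lemma invariance:
  assumes u: "\<forall>l\<in>psi_sigma_set v Sig \<psi>. l \<bullet> u = c0"
  shows "\<psi> (x + t *\<^sub>R u) = \<psi> x + t * c0"
proof -
  define h where "h s = \<psi> (x + s *\<^sub>R u) - s * c0" for s
  have u': "\<forall>l\<in>psi_sigma_set v Sig \<psi>. l \<bullet> (- u) = - c0" using u by simp
  have loc: "\<forall>a\<in>UNIV. eventually (\<lambda>b. h a = h b) (at a within UNIV)"
  proof
    fix a :: real
    obtain e1 where e1: "e1 > 0" "\<And>s. 0 \<le> s \<Longrightarrow> s \<le> e1 \<Longrightarrow> \<psi> ((x + a *\<^sub>R u) + s *\<^sub>R u) = \<psi> (x + a *\<^sub>R u) + s * c0"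
      using right_step[OF u, of "x + a *\<^sub>R u"] by blast
    obtain e2 where e2: "e2 > 0" "\<And>s. 0 \<le> s \<Longrightarrow> s \<le> e2 \<Longrightarrow> \<psi> ((x + a *\<^sub>R u) + s *\<^sub>R (- u)) = \<psi> (x + a *\<^sub>R u) + s * (- c0)"
      using right_step[OF u', of "x + a *\<^sub>R u"] by blast
    show "eventually (\<lambda>b. h a = h b) (at a within UNIV)"
      unfolding eventually_at
    proof (intro exI[of _ "min e1 e2"] conjI ballI impI)
      show "0 < min e1 e2" using e1 e2 by simp
      fix b assume b: "b \<in> UNIV" "b \<noteq> a \<and> dist b a < min e1 e2"
      show "h a = h b"
      proof (cases "a \<le> b")
        case True
        have "b - a \<le> e1" using b True by (simp add: dist_real_def)
        then have "\<psi> ((x + a *\<^sub>R u) + (b - a) *\<^sub>R u) = \<psi> (x + a *\<^sub>R u) + (b - a) * c0"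
          using True e1(2) by simp
        moreover have "(x + a *\<^sub>R u) + (b - a) *\<^sub>R u = x + b *\<^sub>R u" by (simp add: algebra_simps)
        ultimately show ?thesis unfolding h_def by (simp add: algebra_simps)
      next
        case False
        have "a - b \<le> e2" using b False by (simp add: dist_real_def)
        then have "\<psi> ((x + a *\<^sub>R u) + (a - b) *\<^sub>R (- u)) = \<psi> (x + a *\<^sub>R u) + (a - b) * (- c0)"
          using False e2(2) by simp
        moreover have "(x + a *\<^sub>R u) + (a - b) *\<^sub>R (- u) = x + b *\<^sub>R u" by (simp add: algebra_simps)
        ultimately show ?thesis unfolding h_def by (simp add: algebra_simps)
      qed
    qed
  qed
  have "h 0 = h t" by (rule connected_local_const[OF connected_UNIV _ _ loc]) auto
  then show ?thesis unfolding h_def by simp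
qed

end

end


theorem proposition3p8:
  fixes n :: nat and v :: "nat \<Rightarrow> real^'m" and Sig :: "nat set set"
    and \<psi> :: "real^'m \<Rightarrow> real"
  assumes "complete_simplicial_fan n v Sig"
    and "piecewise_linear v Sig \<psi>"
  shows "aff_dim (Lambda_psi v Sig \<psi>) < int CARD('m) \<longleftrightarrow>
         (\<exists>k<n. \<exists>c::real. \<forall>l\<in>Lambda_psi v Sig \<psi>. l \<bullet> v k = c)"
proof
  note fan = assms(1) and pwl = assms(2)
  let ?P = "psi_sigma_set v Sig \<psi>"
  have Lam: "Lambda_psi v Sig \<psi> = convex hull ?P" unfolding Lambda_psi_def ..
  assume lt: "aff_dim (Lambda_psi v Sig \<psi>) < int CARD('m)"
  then have "aff_dim (Lambda_psi v Sig \<psi>) < DIM(real^'m)" by simp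
  then obtain u c0 where u0: "u \<noteq> 0" and uh: "Lambda_psi v Sig \<psi> \<subseteq> {x. u \<bullet> x = c0}"
    by (rule aff_lowdim_subset_hyperplane)
  have uP: "\<forall>l\<in>?P. l \<bullet> u = c0"
  proof
    fix l assume "l \<in> ?P"
    then have "l \<in> Lambda_psi v Sig \<psi>" unfolding Lam by (rule hull_inc)
    then show "l \<bullet> u = c0" using uh by (auto simp: inner_commute)
  qed
  define A where "A = {S \<in> Sig. u \<in> gen_cone v S}"
  have fA: "finite A" using finite_Sig[OF fan] unfolding A_def by simp
  have neA: "A \<noteq> {}" using cover[OF fan, of u] unfolding A_def by blast
  obtain \<tau> where tA: "\<tau> \<in> A" and tmin: "\<And>S. S \<in> A \<Longrightarrow> S \<le> \<tau> \<Longrightarrow> S = \<tau>"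
    using finite_has_minimal[OF fA neA] by (elim bexE) (rule that, auto)
  have tS: "\<tau> \<in> Sig" and ut: "u \<in> gen_cone v \<tau>" using tA unfolding A_def by auto
  have ftau: "finite \<tau>" using Sig_finite[OF fan tS] .
  obtain a where a0: "\<forall>i\<in>\<tau>. 0 \<le> a i" and ua: "u = (\<Sum>i\<in>\<tau>. a i *\<^sub>R v i)"
    using ut unfolding gen_cone_def by blast
  have apos: "\<forall>i\<in>\<tau>. 0 < a i"
  proof
    fix j assume j: "j \<in> \<tau>"
    show "0 < a j"
    proof (rule ccontr)
      assume "\<not> 0 < a j"
      then have aj: "a j = 0" using a0 j by force
      have "u = (\<Sum>i\<in>\<tau> - {j}. a i *\<^sub>R v i)"
        using ua aj j ftau by (simp add: sum.remove)
      then have "u \<in> gen_cone v (\<tau> - {j})" unfolding gen_cone_def using a0 by auto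
      moreover have "\<tau> - {j} \<in> Sig" using fan_down[OF fan tS] by blast
      ultimately have "\<tau> - {j} \<in> A" unfolding A_def by blast
      then have "\<tau> - {j} = \<tau>" using tmin by blast
      then show False using j by blast
    qed
  qed
  have "\<tau> \<noteq> {}" using ua u0 by auto
  then obtain k where k: "k \<in> \<tau>" by blast
  have kn: "k < n" using fan_sub[OF fan tS] k by auto
  obtain dl where dl1: "dl > 0" and dl2: "\<And>y S. dist u y < dl \<Longrightarrow> S \<in> Sig \<Longrightarrow> y \<in> gen_cone v S \<Longrightarrow> \<tau> \<subseteq> S"
    using star[OF fan tS apos] unfolding ua[symmetric] by blast
  have key: "l \<bullet> v k = \<psi> (v k)" if lP: "l \<in> ?P" for l
  proof -
    obtain \<sigma> where sg: "maximal_cone Sig \<sigma>" and l: "\<forall>x\<in>gen_cone v \<sigma>. \<psi> x = l \<bullet> x"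
      using lP unfolding psi_sigma_set_def by blast
    obtain x r where r: "r > 0" and xr: "ball x r \<subseteq> gen_cone v \<sigma>" using fulldim[OF fan sg] by blast
    define s where "s = r / (norm (v k) + 1)"
    have np: "norm (v k) + 1 > 0" by (simp add: add_nonneg_pos)
    have s: "s > 0" using r np by (simp add: s_def)
    have "dist x (x + s *\<^sub>R v k) = s * norm (v k)" using s by (simp add: dist_norm)
    also have "\<dots> < s * (norm (v k) + 1)" using s by simp
    also have "\<dots> = r" using np by (simp add: s_def)
    finally have "x + s *\<^sub>R v k \<in> ball x r" by simp
    then have x1: "x + s *\<^sub>R v k \<in> gen_cone v \<sigma>" using xr by blast
    have x0: "x \<in> gen_cone v \<sigma>" using xr r by auto
    define t where "t = (norm x + 1) / dl"
    have t: "t > 0" using dl1 by (simp add: t_def add_nonneg_pos)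
    define z0 where "z0 = x + t *\<^sub>R u"
    obtain S where S: "S \<in> Sig" "z0 \<in> gen_cone v S" using cover[OF fan] by blast
    have "(1 / t) *\<^sub>R z0 \<in> gen_cone v S" using S(2) t by (intro gc_scale) auto
    moreover have "(1 / t) *\<^sub>R z0 = u + (1 / t) *\<^sub>R x" using t by (simp add: z0_def algebra_simps)
    moreover have "dist u (u + (1 / t) *\<^sub>R x) < dl"
    proof -
      have "dist u (u + (1 / t) *\<^sub>R x) = norm x / t" using t by (simp add: dist_norm)
      also have "\<dots> = norm x * dl / (norm x + 1)" using dl1 by (simp add: t_def)
      also have "\<dots> < dl"
        using dl1 by (simp add: divide_less_eq add_nonneg_pos)
      finally show ?thesis .
    qed
    ultimately have "\<tau> \<subseteq> S" using dl2 S(1) by metis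
    then have kS: "k \<in> S" using k by blast
    have fS: "finite S" using Sig_finite[OF fan S(1)] .
    have vkS: "v k \<in> gen_cone v S" using gc_gen[OF fS kS] .
    have z1S: "z0 + s *\<^sub>R v k \<in> gen_cone v S"
      using S(2) vkS s by (intro gc_add gc_scale) auto
    obtain lS where lS: "\<forall>y\<in>gen_cone v S. \<psi> y = lS \<bullet> y" using pwl_lin[OF fan pwl S(1)] by blast
    have "\<psi> (z0 + s *\<^sub>R v k) = \<psi> z0 + s * \<psi> (v k)"
      using lS z1S S(2) vkS by (simp add: inner_add_right)
    moreover have "\<psi> z0 = l \<bullet> x + t * c0"
      using invariance[OF fan pwl uP, of x t] l x0 unfolding z0_def by simp
    moreover have "\<psi> (z0 + s *\<^sub>R v k) = l \<bullet> (x + s *\<^sub>R v k) + t * c0"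
    proof -
      have e: "z0 + s *\<^sub>R v k = (x + s *\<^sub>R v k) + t *\<^sub>R u" by (simp add: z0_def algebra_simps)
      have "\<psi> ((x + s *\<^sub>R v k) + t *\<^sub>R u) = \<psi> (x + s *\<^sub>R v k) + t * c0"
        by (rule invariance[OF fan pwl uP])
      moreover have "\<psi> (x + s *\<^sub>R v k) = l \<bullet> (x + s *\<^sub>R v k)" using l x1 by blast
      ultimately show ?thesis unfolding e by simp
    qed
    ultimately have "s * (l \<bullet> v k) = s * \<psi> (v k)" by (simp add: inner_add_right)
    then show ?thesis using s by simp
  qed
  have "Lambda_psi v Sig \<psi> \<subseteq> {l. v k \<bullet> l = \<psi> (v k)}"
    unfolding Lam
  proof (rule hull_minimal)
    show "?P \<subseteq> {l. v k \<bullet> l = \<psi> (v k)}" using key by (auto simp: inner_commute)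
  qed (rule convex_hyperplane)
  then show "\<exists>k<n. \<exists>c::real. \<forall>l\<in>Lambda_psi v Sig \<psi>. l \<bullet> v k = c"
    using kn by (intro exI[of _ k] conjI exI[of _ "\<psi> (v k)"]) (auto simp: inner_commute)
next
  assume "\<exists>k<n. \<exists>c::real. \<forall>l\<in>Lambda_psi v Sig \<psi>. l \<bullet> v k = c"
  then obtain k c where k: "k < n" and h: "\<forall>l\<in>Lambda_psi v Sig \<psi>. l \<bullet> v k = c" by blast
  have nz: "v k \<noteq> 0" using fan_nz[OF assms(1) k] .
  have "Lambda_psi v Sig \<psi> \<subseteq> {x. v k \<bullet> x = c}" using h by (auto simp: inner_commute)
  then have "aff_dim (Lambda_psi v Sig \<psi>) \<le> aff_dim {x. v k \<bullet> x = c}" by (rule aff_dim_subset)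
  also have "\<dots> = int DIM(real^'m) - 1" using nz by simp
  finally show "aff_dim (Lambda_psi v Sig \<psi>) < int CARD('m)" by simp
qed

end
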